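(* Consider $K$ tiers of satellites, tier $k$ consisting of $N_k$ satellites placed independently and uniformly on the sphere of radius $R_k$, with tier $m$ legitimate and tiers $k\ne m$ eavesdropping. For the $j$-th satellite of tier $k\ne m$ with central angle $\theta_{kj}$ to the typical device at $(0,0,R_\oplus)$ and distance $d_{kj,0}=\sqrt{R_\oplus^2+R_k^2-2R_\oplus R_k\cos\theta_{kj}}$, define (when $\theta_{kj}<\theta_{k,\max}$) $$\mathrm{SINR}_{kj}=\frac{\gamma P_{\rm rec}(d_{kj,0})}{(1-\gamma)P_{\rm rec}(d_{kj,0})+\mathcal{I}_{kj}+\sigma_S^2},\qquad P_{\rm rec}(d)=P_t\left(\frac{c}{4\pi f d}\right)^2G|h_{kj,0}|^2,$$ and set $\mathrm{SINR}_{kj}=0$ when $\theta_{kj}\ge\theta_{k,\max}$ (not visible). Assume: $m_1$ is a positive integer; $0<\beta_{\rm ES}<\gamma/(1-\gamma)$ (any $\beta_{\rm ES}>0$ if $\gamma=1$); the events $\{\mathrm{SINR}_{kj}<\beta_{\rm ES}\}$ are mutually independent over all $k\ne m$ and $j$; $|h_{kj,0}|^2$ is independent of $(\theta_{kj},\mathcal{I}_{kj})$ with CDF $F(x)=\left[1-\exp\!\left(-\frac{(m_1!)^{-1/m_1}}{m_2}x\right)\right]^{m_1}$; and conditionally on $\theta_{kj}$, $\mathcal{I}_{kj}$ has Laplace transform $$\mathcal{L}_{\mathcal{I}_{kj}}(s)=\exp\!\left(-\lambda_u\int_0^{2\pi}\!\!\int_0^{\theta_{k,\max}}\left[1-\left(1+m_2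 s P_t G\left(\frac{c}{4\pi f d_k(\vartheta)}\right)^2\right)^{-m_1}\right]R_\oplus^2\sin\vartheta\,d\vartheta\,d\varphi\right),$$ $d_k(\vartheta)=\sqrt{R_\oplus^2+R_k^2-2R_\oplus R_k\cos\vartheta}$. Then $$\mathcal{P}_{\rm out}=\mathbb{P}\left[\max_{k\ne m}\max_{j}\mathrm{SINR}_{kj}<\beta_{\rm ES}\right]=\prod_{k=1,k\ne m}^{K}\left[\sum_{q=0}^{m_1}\binom{m_1}{q}(-1)^q\int_0^{\theta_{k,\max}}\exp\!\left(-q s_{\rm ES}\sigma_S^2\right)\mathcal{L}_{\mathcal{I}_{kj}}(q s_{\rm ES})\frac{\sin\theta}{2}\,d\theta+\frac{1+\cos\theta_{k,\max}}{2}\right]^{N_k},$$ where $s_{\rm ES}=s_{\rm ES}(\theta)=\frac{(m_1!)^{-1/m_1}}{m_2}\frac{\beta_{\rm ES}}{[\gamma-\beta_{\rm ES}(1-\gamma)]P_tG}\left(\frac{4\pi f d_k(\theta)}{c}\right)^2$.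
   Context: $R_\oplus$ is the Earth radius and $R_k=R_\oplus+a_k>R_\oplus$ with $a_k$ the altitude of tier $k$; $\gamma\in(0,1]$ is the fraction of transmit power $P_t>0$ carrying information, the remaining $(1-\gamma)P_t$ being artificial noise which eavesdroppers cannot remove; $G>0$ antenna gain; $c$ speed of light; $f>0$ carrier frequency; $\sigma_S^2>0$ noise power; $\lambda_u$ density of the Poisson point process of interfering devices on the Earth sphere; $m_1,m_2>0$ fading parameters. Given a half beamwidth angle $\theta_{\rm beam}\in(0,\pi/2)$, $$\theta_{k,\max}=\begin{cases}\sin^{-1}\!\left(\frac{R_k}{R_\oplus}\sin\theta_{\rm beam}\right)-\theta_{\rm beam}, & \theta_{\rm beam}<\sin^{-1}\!\left(\frac{R_\oplus}{R_k}\right),\\[2pt] \cos^{-1}\!\left(\frac{R_\oplus}{R_k}\right), & \theta_{\rm beam}\ge \sin^{-1}\!\left(\frac{R_\oplus}{R_k}\right).\end{cases}$$ The central angle of a single uniformly placed satellite to the typical device has density $\frac{\sin\theta}{2}$ on $[0,\pi]$. *)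

theory Defs
  imports "HOL-Probability.Probability"
begin

text \<open>Tier radius R_k = R_earth + a_k, with a_k the altitude of tier k.\<close>
definition tier_radius :: "real \<Rightarrow> (nat \<Rightarrow> real) \<Rightarrow> nat \<Rightarrow> real" where
  "tier_radius Rearth a k = Rearth + a k"

definition theta_max :: "real \<Rightarrow> (nat \<Rightarrow> real) \<Rightarrow> real \<Rightarrow> nat \<Rightarrow> real" where
  "theta_max Rearth a thb k =
     (let Rk = tier_radius Rearth a k in
      if thb < arcsin (Rearth / Rk) then arcsin (Rk / Rearth * sin thb) - thb
      else arccos (Rearth / Rk))"

definition dist_k :: "real \<Rightarrow> (nat \<Rightarrow> real) \<Rightarrow> nat \<Rightarrow> real \<Rightarrow> real" where
  "dist_k Rearth a k th =
     (let Rk = tier_radius Rearth a k in sqrt (Rearth\<^sup>2 + Rk\<^sup>2 - 2 * Rearth * Rk * cos th))"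

definition P_rec :: "real \<Rightarrow> real \<Rightarrow> real \<Rightarrow> real \<Rightarrow> real \<Rightarrow> real \<Rightarrow> real" where
  "P_rec Pt G c f d hsq = Pt * (c / (4 * pi * f * d))\<^sup>2 * G * hsq"

definition SINR_sat ::
  "real \<Rightarrow> (nat \<Rightarrow> real) \<Rightarrow> real \<Rightarrow> real \<Rightarrow> real \<Rightarrow> real \<Rightarrow> real \<Rightarrow> real \<Rightarrow> real \<Rightarrow>
   nat \<Rightarrow> real \<Rightarrow> real \<Rightarrow> real \<Rightarrow> real" where
  "SINR_sat Rearth a thb gam Pt G c f sig2 k th hsq Iv =
     (if th < theta_max Rearth a thb k then
        (let Pr = P_rec Pt G c f (dist_k Rearth a k th) hsq in
         gam * Pr / ((1 - gam) * Pr + Iv + sig2))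
      else 0)"

definition fading_cdf :: "nat \<Rightarrow> real \<Rightarrow> real \<Rightarrow> real" where
  "fading_cdf m1 m2 x =
     (if x < 0 then 0
      else (1 - exp (- ((fact m1) powr (- 1 / real m1) / m2) * x)) ^ m1)"

definition laplace_I ::
  "real \<Rightarrow> (nat \<Rightarrow> real) \<Rightarrow> real \<Rightarrow> real \<Rightarrow> real \<Rightarrow> real \<Rightarrow> real \<Rightarrow> real \<Rightarrow> nat \<Rightarrow> real \<Rightarrow>
   nat \<Rightarrow> real \<Rightarrow> real" where
  "laplace_I Rearth a thb lam Pt G c f m1 m2 k s =
     exp (- lam * (LBINT phi=0..(2*pi). (LBINT v=0..(theta_max Rearth a thb k).
        (1 - (1 + m2 * s * Pt * G * (c / (4 * pi * f * dist_k Rearth a k v))\<^sup>2) powr (- real m1))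
        * Rearth\<^sup>2 * sin v)))"

definition s_ES ::
  "real \<Rightarrow> (nat \<Rightarrow> real) \<Rightarrow> real \<Rightarrow> real \<Rightarrow> real \<Rightarrow> real \<Rightarrow> real \<Rightarrow> real \<Rightarrow> nat \<Rightarrow> real \<Rightarrow>
   nat \<Rightarrow> real \<Rightarrow> real" where
  "s_ES Rearth a gam bet Pt G c f m1 m2 k th =
     (fact m1) powr (- 1 / real m1) / m2 * bet / ((gam - bet * (1 - gam)) * Pt * G)
     * (4 * pi * f * dist_k Rearth a k th / c)\<^sup>2"

end

theory Submission
  imports Defs
begin


lemma tier_gt: "Rearth > 0 \<Longrightarrow> a k > 0 \<Longrightarrow> tier_radius Rearth a k > Rearth"
  by (simp add: tier_radius_def)

lemma dist_pos:
  assumes "Rearth > 0" "a k > 0"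
  shows "dist_k Rearth a k th > 0"
proof -
  define R where "R = tier_radius Rearth a k"
  have R: "R > Rearth" using tier_gt[of Rearth a k, OF assms] R_def by simp
  have "2 * Rearth * R * cos th \<le> 2 * Rearth * R"
    proof -
    have "Rearth * R * cos th \<le> Rearth * R * 1"
      using R assms(1) by (intro mult_left_mono) auto
    then show ?thesis by (simp add: mult.commute mult.left_commute)
  qed
  then have "Rearth\<^sup>2 + R\<^sup>2 - 2 * Rearth * R * cos th \<ge> (R - Rearth)\<^sup>2"
    by (simp add: power2_diff algebra_simps)
  moreover have "(R - Rearth)\<^sup>2 > 0" using R by simp
  ultimately have "Rearth\<^sup>2 + R\<^sup>2 - 2 * Rearth * R * cos th > 0" by linarith
  then show ?thesis unfolding dist_k_def R_def[symmetric] Let_def by simp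
qed

lemma dist_cont: "continuous_on UNIV (dist_k Rearth a k)"
  unfolding dist_k_def Let_def by (intro continuous_intros)

lemma theta_max_bounds:
  assumes "Rearth > 0" "a k > 0" "0 < thb" "thb < pi/2"
  shows "0 \<le> theta_max Rearth a thb k \<and> theta_max Rearth a thb k \<le> pi"
proof -
  define R where "R = tier_radius Rearth a k"
  have R: "R > Rearth" using tier_gt[of Rearth a k, OF assms(1,2)] R_def by simp
  have q: "0 < Rearth / R" "Rearth / R < 1" using R assms(1) by auto
  have arc: "- (pi / 2) \<le> arcsin (Rearth / R) \<and> arcsin (Rearth / R) \<le> pi / 2 \<and> sin (arcsin (Rearth / R)) = Rearth / R"
    using arcsin[of "Rearth/R"] q by simp
  show ?thesis
  proof (cases "thb < arcsin (Rearth / R)")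
    case True
    have "sin thb < sin (arcsin (Rearth / R))"
      using True assms(3,4) arc by (intro sin_monotone_2pi) auto
    then have s1: "sin thb < Rearth / R" using arc by simp
    have s0: "sin thb > 0" using assms(3,4) by (intro sin_gt_zero) auto
    have "R / Rearth * sin thb < R / Rearth * (Rearth / R)"
      using s1 R assms(1) by (intro mult_strict_left_mono) auto
    then have u1: "R / Rearth * sin thb < 1" using R assms(1) by simp
    have u2: "sin thb \<le> R / Rearth * sin thb"
    proof -
      have "1 * sin thb \<le> (R / Rearth) * sin thb"
        using s0 R assms(1) by (intro mult_right_mono) auto
      then show ?thesis by simp
    qed
    have "arcsin (sin thb) \<le> arcsin (R / Rearth * sin thb)"
      using u1 u2 s0 by (intro arcsin_le_arcsin) auto
    then have l: "thb \<le> arcsin (R / Rearth * sin thb)"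
      using assms(3,4) by (simp add: arcsin_sin)
    have "arcsin (R / Rearth * sin thb) \<le> pi/2"
      using u1 u2 s0 by (intro arcsin_ubound) auto
    then show ?thesis using True l assms(3,4)
      unfolding theta_max_def R_def[symmetric] Let_def by auto
  next
    case False
    then show ?thesis using q arccos_lbound[of "Rearth/R"] arccos_ubound[of "Rearth/R"]
      unfolding theta_max_def R_def[symmetric] Let_def by auto
  qed
qed



definition alph :: "nat \<Rightarrow> real \<Rightarrow> real" where
  "alph m1 m2 = (fact m1) powr (- 1 / real m1) / m2"

lemma alph_pos: "m2 > 0 \<Longrightarrow> alph m1 m2 > 0"
  unfolding alph_def by simp

lemma sES_eq: "s_ES Rearth a gam bet Pt G c f m1 m2 k th =
   alph m1 m2 * bet / ((gam - bet * (1 - gam)) * Pt * G) / (c / (4 * pi * f * dist_k Rearth a k th))\<^sup>2"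
  unfolding s_ES_def alph_def by (simp add: power_divide field_simps)

lemma sinr_iff:
  assumes Re: "Rearth > 0" "a k > 0" and pos: "Pt > 0" "G > 0" "c > 0" "f > 0" "sig2 > 0" "m2 > 0"
    and gam: "gam \<le> 1" and gd: "gam - bet * (1 - gam) > 0" and bet: "bet > 0"
    and t: "t < theta_max Rearth a thb k" and h: "h > 0" and i: "i \<ge> 0"
  shows "SINR_sat Rearth a thb gam Pt G c f sig2 k t h i < bet \<longleftrightarrow>
     alph m1 m2 * h < s_ES Rearth a gam bet Pt G c f m1 m2 k t * (i + sig2)"
proof -
  define d where "d = dist_k Rearth a k t"
  have d: "d > 0" using dist_pos[of Rearth a k, OF Re] d_def by simp
  define u where "u = (c / (4 * pi * f * d))\<^sup>2"
  have u: "u > 0" using d pos unfolding u_def by simp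
  define gd where "gd = gam - bet * (1 - gam)"
  have gd0: "gd > 0" using gd gd_def by simp
  define al where "al = alph m1 m2"
  have al: "al > 0" using alph_pos pos al_def by simp
  have Pr: "P_rec Pt G c f d h = Pt * u * G * h" unfolding P_rec_def u_def by simp
  have Prp: "Pt * u * G * h > 0" using pos u h by simp
  have D: "(1 - gam) * (Pt * u * G * h) + i + sig2 > 0"
    using gam Prp i pos by (smt (verit) mult_nonneg_nonneg)
  have "SINR_sat Rearth a thb gam Pt G c f sig2 k t h i < bet \<longleftrightarrow>
        gam * (Pt * u * G * h) / ((1 - gam) * (Pt * u * G * h) + i + sig2) < bet"
    unfolding SINR_sat_def using t by (simp add: d_def[symmetric] Pr Let_def)
  also have "\<dots> \<longleftrightarrow> gam * (Pt * u * G * h) < bet * ((1 - gam) * (Pt * u * G * h) + i + sig2)"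
    using D by (simp add: divide_less_eq)
  also have "\<dots> \<longleftrightarrow> (Pt * u * G * h) * gd < bet * (i + sig2)"
    unfolding gd_def by (simp add: algebra_simps)
  also have "\<dots> \<longleftrightarrow> al * h < al * bet / (gd * Pt * G) / u * (i + sig2)"
  proof -
    have e: "al * bet / (gd * Pt * G) / u * (i + sig2) = al * (bet * (i + sig2) / (gd * Pt * G * u))"
      by (simp add: field_simps)
    have "al * h < al * (bet * (i + sig2) / (gd * Pt * G * u)) \<longleftrightarrow> h < bet * (i + sig2) / (gd * Pt * G * u)"
      using al by (simp only: mult_less_cancel_left_pos)
    also have "\<dots> \<longleftrightarrow> h * (gd * Pt * G * u) < bet * (i + sig2)"
      using gd0 pos u by (simp add: less_divide_eq)
    finally show ?thesis unfolding e by (simp add: algebra_simps)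
  qed
  finally show ?thesis unfolding sES_eq al_def gd_def u_def d_def by simp
qed



definition rho :: "real \<Rightarrow> real" where
  "rho x = indicator {0..pi} x * sin x / 2"

lemma rho_nonneg: "rho x \<ge> 0"
  unfolding rho_def by (auto simp: indicator_def intro: sin_ge_zero)

lemma rho_meas[measurable]: "rho \<in> borel_measurable borel"
  unfolding rho_def by measurable

locale setting = prob_space M for M :: "'w measure" +
  fixes X H I :: "'w \<Rightarrow> real" and m1 :: nat and m2 sig2 :: real and Lap :: "real \<Rightarrow> real"
  assumes measX[measurable]: "X \<in> borel_measurable M"
    and measH[measurable]: "H \<in> borel_measurable M"
    and measI[measurable]: "I \<in> borel_measurable M"
    and Xdistr: "distributed M lborel X (\<lambda>x. ennreal (indicator {0..pi} x * sin x / 2))"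
    and Inn: "\<And>w. w \<in> space M \<Longrightarrow> I w \<ge> 0"
    and Hcdf: "\<And>x. measure M {w \<in> space M. H w \<le> x} = fading_cdf m1 m2 x"
    and Hind: "\<And>B C. B \<in> sets (borel :: real measure) \<Longrightarrow> C \<in> sets (borel :: (real \<times> real) measure) \<Longrightarrow>
        measure M {w \<in> space M. H w \<in> B \<and> (X w, I w) \<in> C}
          = measure M {w \<in> space M. H w \<in> B} * measure M {w \<in> space M. (X w, I w) \<in> C}"
    and Ilap: "\<And>s A. s \<ge> 0 \<Longrightarrow> A \<in> sets borel \<Longrightarrow>
        (\<integral>w. exp (- s * I w) * indicator A (X w) \<partial>M) = Lap s * measure M {w \<in> space M. X w \<in> A}"
    and m1: "m1 \<ge> 1" and m2: "m2 > 0" and sig2: "sig2 > 0"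
begin

lemma X_integral:
  assumes g[measurable]: "g \<in> borel_measurable borel"
  shows "(\<integral>w. g (X w) \<partial>M) = (\<integral>x. rho x * g x \<partial>lborel)"
proof -
  have d: "distr M lborel X = density lborel (\<lambda>x. ennreal (rho x))"
    using distributed_distr_eq_density[OF Xdistr] unfolding rho_def by simp
  have "(\<integral>w. g (X w) \<partial>M) = integral\<^sup>L (distr M lborel X) g"
    by (rule integral_distr[symmetric]) auto
  also have "\<dots> = (\<integral>x. rho x *\<^sub>R g x \<partial>lborel)"
    unfolding d by (rule integral_density) (auto simp: rho_nonneg)
  finally show ?thesis by simp
qed

lemma prob_X:
  assumes A[measurable]: "A \<in> sets borel"
  shows "measure M {w \<in> space M. X w \<in> A} = (\<integral>x. rho x * indicator A x \<partial>lborel)"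
proof -
  have "measure M {w \<in> space M. X w \<in> A} = (\<integral>w. indicator {w \<in> space M. X w \<in> A} w \<partial>M)"
    using Bochner_Integration.integral_indicator[of M "{w \<in> space M. X w \<in> A}"] by (simp add: Int_absorb2 subset_iff)
  also have "\<dots> = (\<integral>w. indicator A (X w) \<partial>M)"
    by (rule Bochner_Integration.integral_cong) (auto simp: indicator_def)
  also have "\<dots> = (\<integral>x. rho x * indicator A x \<partial>lborel)"
    by (rule X_integral) simp
  finally show ?thesis .
qed

lemma prob_X_le0: "measure M {w \<in> space M. X w \<le> 0} = 0"
proof -
  have "measure M {w \<in> space M. X w \<le> 0} = measure M {w \<in> space M. X w \<in> {..0}}" by simp
  also have "\<dots> = (\<integral>x. rho x * indicator {..0} x \<partial>lborel)" by (rule prob_X) simp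
  also have "\<dots> = (\<integral>x. (0::real) \<partial>(lborel::real measure))"
  proof (rule Bochner_Integration.integral_cong)
    fix x show "rho x * indicator {..0} x = 0"
      by (cases "x < 0"; cases "x = 0") (auto simp: rho_def indicator_def)
  qed simp
  finally show ?thesis by simp
qed

lemma prob_X_ge:
  assumes "0 \<le> tm" "tm \<le> pi"
  shows "measure M {w \<in> space M. tm \<le> X w} = (1 + cos tm) / 2"
proof -
  have "measure M {w \<in> space M. tm \<le> X w} = measure M {w \<in> space M. X w \<in> {tm..}}" by simp
  also have "\<dots> = (\<integral>x. rho x * indicator {tm..} x \<partial>lborel)" by (rule prob_X) simp
  also have "\<dots> = (\<integral>x. sin x / 2 * indicator {tm..pi} x \<partial>lborel)"
    using assms by (intro Bochner_Integration.integral_cong) (auto simp: rho_def indicator_def)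
  also have "\<dots> = (- cos pi / 2) - (- cos tm / 2)"
    using assms by (intro integral_FTC_Icc_real) (auto intro!: derivative_eq_intros)
  finally show ?thesis by simp
qed

definition L' :: "real \<Rightarrow> real" where
  "L' s = (\<integral>w. exp (- s * I w) \<partial>M)"

lemma Lap_eq: "s \<ge> 0 \<Longrightarrow> Lap s = L' s"
  using Ilap[of s UNIV] by (simp add: L'_def prob_space)

lemma L'_bounds: "s \<ge> 0 \<Longrightarrow> 0 \<le> L' s \<and> L' s \<le> 1"
proof -
  assume s: "s \<ge> 0"
  have "L' s \<le> (\<integral>w. 1 \<partial>M)" unfolding L'_def
    using s Inn by (intro integral_mono integrable_const_bound[where B=1]) (auto simp: mult_nonneg_nonneg)
  moreover have "0 \<le> L' s" unfolding L'_def by simp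
  ultimately show ?thesis by (simp add: prob_space)
qed

lemma L'_cont: "continuous_on {0..} L'"
proof (rule continuous_on_sequentiallyI)
  fix u a assume u: "\<forall>n. u n \<in> {0::real..}" and a: "a \<in> {0..}" and lim: "u \<longlonglongrightarrow> a"
  show "(\<lambda>n. L' (u n)) \<longlonglongrightarrow> L' a"
    unfolding L'_def
  proof (rule integral_dominated_convergence[where w="\<lambda>_. 1"])
    show "AE x in M. (\<lambda>i. exp (- u i * I x)) \<longlonglongrightarrow> exp (- a * I x)"
      by (intro AE_I2 tendsto_intros lim)
    show "\<And>i. AE x in M. norm (exp (- u i * I x)) \<le> 1"
      using u Inn by (intro AE_I2) (auto simp: mult_nonneg_nonneg)
  qed auto
qed

end


lemma fading_cdf_meas[measurable]: "fading_cdf m1 m2 \<in> borel_measurable borel"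
  unfolding fading_cdf_def by measurable

lemma fading_cdf_bounds: "m2 > 0 \<Longrightarrow> 0 \<le> fading_cdf m1 m2 x \<and> fading_cdf m1 m2 x \<le> 1"
proof -
  assume m2: "m2 > 0"
  have a: "(fact m1) powr (- 1 / real m1) / m2 \<ge> 0" using m2 by simp
  show ?thesis
  proof (cases "x < 0")
    case False
    have "0 \<le> ((fact m1) powr (- 1 / real m1) / m2) * x"
      using a False by (intro mult_nonneg_nonneg) auto
    then have "exp (- ((fact m1) powr (- 1 / real m1) / m2) * x) \<le> 1"
      by simp
    then show ?thesis using False unfolding fading_cdf_def by (auto intro!: power_le_one)
  qed (simp add: fading_cdf_def)
qed

lemma fading_cdf_0: "m1 \<ge> 1 \<Longrightarrow> fading_cdf m1 m2 0 = 0"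
  unfolding fading_cdf_def by simp

context setting begin

lemma H_le0: "measure M {w \<in> space M. H w \<le> 0} = 0"
  using Hcdf[of 0] fading_cdf_0[OF m1] by simp

lemma H_less: "measure M {w \<in> space M. H w < y} = fading_cdf m1 m2 y"
proof (cases "y \<le> 0")
  case True
  have "measure M {w \<in> space M. H w < y} \<le> measure M {w \<in> space M. H w \<le> 0}"
    using True by (intro finite_measure_mono) auto
  then have "measure M {w \<in> space M. H w < y} = 0" using H_le0 measure_nonneg[of M] by (metis order.antisym)
  moreover have "fading_cdf m1 m2 y = 0"
    using True fading_cdf_0[OF m1] by (cases "y = 0") (auto simp: fading_cdf_def)
  ultimately show ?thesis by simp
next
  case False
  then have y: "y > 0" by simp
  define A where "A n = {w \<in> space M. H w \<le> y - inverse (real (Suc n))}" for n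
  have inc: "incseq A"
    unfolding A_def incseq_def
  proof (intro allI impI subsetI)
    fix m n w assume mn: "m \<le> n" and w: "w \<in> {w \<in> space M. H w \<le> y - inverse (real (Suc m))}"
    have iv: "inverse (real (Suc n)) \<le> inverse (real (Suc m))"
      using mn by (intro le_imp_inverse_le) auto
    have "H w \<le> y - inverse (real (Suc m))" "w \<in> space M" using w by auto
    then show "w \<in> {w \<in> space M. H w \<le> y - inverse (real (Suc n))}" using iv by (smt (verit) mem_Collect_eq)
  qed
  have U: "(\<Union>n. A n) = {w \<in> space M. H w < y}"
  proof (intro equalityI subsetI)
    fix w assume "w \<in> (\<Union>n. A n)"
    then obtain n where "w \<in> space M" "H w \<le> y - inverse (real (Suc n))" unfolding A_def by auto
    moreover have "inverse (real (Suc n)) > 0" by simp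
    ultimately show "w \<in> {w \<in> space M. H w < y}" by (smt (verit) mem_Collect_eq)
  next
    fix w assume w: "w \<in> {w \<in> space M. H w < y}"
    then obtain n where "inverse (real (Suc n)) < y - H w"
      using reals_Archimedean[of "y - H w"] by auto
    then have "H w \<le> y - inverse (real (Suc n))" by linarith
    then show "w \<in> (\<Union>n. A n)" using w unfolding A_def by blast
  qed
  have lim1: "(\<lambda>n. measure M (A n)) \<longlonglongrightarrow> measure M {w \<in> space M. H w < y}"
  proof -
    have "range A \<subseteq> sets M" unfolding A_def by auto
    then show ?thesis using finite_Lim_measure_incseq[of A] inc U by simp
  qed
  have inv0: "(\<lambda>n. inverse (real (Suc n))) \<longlonglongrightarrow> 0"
    by (rule LIMSEQ_inverse_real_of_nat)
  have ev: "eventually (\<lambda>n. inverse (real (Suc n)) < y) sequentially"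
    using order_tendstoD(2)[OF inv0 y] .
  define al where "al = (fact m1) powr (- 1 / real m1) / m2"
  have lim2: "(\<lambda>n. (1 - exp (- al * (y - inverse (real (Suc n))))) ^ m1)
      \<longlonglongrightarrow> (1 - exp (- al * (y - 0))) ^ m1"
    by (intro tendsto_intros inv0)
  have fy: "fading_cdf m1 m2 y = (1 - exp (- al * (y - 0))) ^ m1"
    using y by (simp add: fading_cdf_def al_def)
  have "(\<lambda>n. measure M (A n)) \<longlonglongrightarrow> fading_cdf m1 m2 y"
    unfolding fy
  proof (rule Lim_transform_eventually[OF lim2])
    show "\<forall>\<^sub>F n in sequentially. (1 - exp (- al * (y - inverse (real (Suc n))))) ^ m1 = measure M (A n)"
      using ev by eventually_elim (simp add: A_def Hcdf fading_cdf_def al_def)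
  qed
  then show ?thesis using lim1 LIMSEQ_unique by blast
qed

end


context setting begin

lemma Z_meas[measurable]: "(\<lambda>w. (X w, I w)) \<in> borel_measurable M"
  by measurable

lemma pair_distr:
  "distr M borel (\<lambda>w. (X w, I w)) \<Otimes>\<^sub>M distr M borel H = distr M borel (\<lambda>w. ((X w, I w), H w))"
proof (rule pair_measure_eqI)
  show "sigma_finite_measure (distr M borel (\<lambda>w. (X w, I w)))"
    by (intro prob_space_imp_sigma_finite prob_space_distr) simp
  show "sigma_finite_measure (distr M borel H)"
    by (intro prob_space_imp_sigma_finite prob_space_distr) simp
  show "sets (distr M borel (\<lambda>w. (X w, I w)) \<Otimes>\<^sub>M distr M borel H) = sets (distr M borel (\<lambda>w. ((X w, I w), H w)))"
    by (simp add: borel_prod[symmetric] cong: sets_pair_measure_cong)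
next
  fix A B assume A: "A \<in> sets (distr M borel (\<lambda>w. (X w, I w)))" and B: "B \<in> sets (distr M borel H)"
  then have A'[measurable]: "A \<in> sets (borel :: (real \<times> real) measure)" and B'[measurable]: "B \<in> sets (borel :: real measure)" by auto
  have "emeasure (distr M borel (\<lambda>w. ((X w, I w), H w))) (A \<times> B)
      = emeasure M {w \<in> space M. H w \<in> B \<and> (X w, I w) \<in> A}"
  proof -
    have AB: "A \<times> B \<in> sets (borel :: ((real \<times> real) \<times> real) measure)"
    proof -
      have "A \<times> B \<in> sets ((borel :: (real \<times> real) measure) \<Otimes>\<^sub>M (borel :: real measure))"
        using A' B' by (intro pair_measureI)
      then show ?thesis unfolding borel_prod .
    qed
    show ?thesis
      by (subst emeasure_distr) (auto intro!: arg_cong2[where f=emeasure] AB)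
  qed
  also have "\<dots> = ennreal (measure M {w \<in> space M. H w \<in> B} * measure M {w \<in> space M. (X w, I w) \<in> A})"
    by (simp add: emeasure_eq_measure Hind)
  also have "\<dots> = emeasure (distr M borel (\<lambda>w. (X w, I w))) A * emeasure (distr M borel H) B"
    by (simp add: emeasure_distr emeasure_eq_measure ennreal_mult'' mult.commute vimage_def Int_def conj_commute)
  finally show "emeasure (distr M borel (\<lambda>w. (X w, I w))) A * emeasure (distr M borel H) B =
      emeasure (distr M borel (\<lambda>w. ((X w, I w), H w))) (A \<times> B)" by simp
qed

lemma prob_pair:
  assumes S[measurable]: "S \<in> sets (borel :: real measure)"
    and Yf[measurable]: "Yf \<in> borel_measurable (borel :: (real \<times> real) measure)"
  shows "measure M {w \<in> space M. X w \<in> S \<and> H w < Yf (X w, I w)}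
     = (\<integral>w. indicator S (X w) * fading_cdf m1 m2 (Yf (X w, I w)) \<partial>M)"
proof -
  define PZ where "PZ = distr M borel (\<lambda>w. (X w, I w))"
  define PH where "PH = distr M borel H"
  interpret PH: prob_space PH unfolding PH_def by (intro prob_space_distr) simp
  define D where "D = {p :: (real \<times> real) \<times> real. fst (fst p) \<in> S \<and> snd p < Yf (fst p)}"
  have Yf'[measurable]: "Yf \<in> borel_measurable ((borel :: real measure) \<Otimes>\<^sub>M (borel :: real measure))"
    using Yf by (simp add: borel_prod)
  have Db0: "D \<in> sets (((borel :: real measure) \<Otimes>\<^sub>M (borel :: real measure)) \<Otimes>\<^sub>M (borel :: real measure))"
  proof -
    have "Measurable.pred (((borel :: real measure) \<Otimes>\<^sub>M (borel :: real measure)) \<Otimes>\<^sub>M (borel :: real measure))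
        (\<lambda>p. fst (fst p) \<in> S \<and> snd p < Yf (fst p))" by measurable
    then show ?thesis unfolding pred_def D_def by (simp add: space_pair_measure)
  qed
  have Db: "D \<in> sets (borel :: ((real \<times> real) \<times> real) measure)"
    using Db0 unfolding borel_prod .
  have DP: "D \<in> sets (PZ \<Otimes>\<^sub>M PH)"
    using Db unfolding PZ_def PH_def by (simp add: borel_prod[symmetric] cong: sets_pair_measure_cong)
  define g where "g z = indicator S (fst z) * fading_cdf m1 m2 (Yf z)" for z :: "real \<times> real"
  have g0: "g \<in> borel_measurable ((borel :: real measure) \<Otimes>\<^sub>M (borel :: real measure))"
    unfolding g_def by measurable
  have g[measurable]: "g \<in> borel_measurable borel" using g0 unfolding borel_prod .
  have gb: "0 \<le> g z \<and> g z \<le> 1" for z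
    using fading_cdf_bounds[OF m2, of m1 "Yf z"] unfolding g_def by (auto simp: indicator_def)
  have "emeasure M {w \<in> space M. X w \<in> S \<and> H w < Yf (X w, I w)}
      = emeasure (distr M borel (\<lambda>w. ((X w, I w), H w))) D"
    using Db by (subst emeasure_distr) (auto intro!: arg_cong2[where f=emeasure] simp: D_def)
  also have "\<dots> = emeasure (PZ \<Otimes>\<^sub>M PH) D"
    unfolding PZ_def PH_def pair_distr ..
  also have "\<dots> = (\<integral>\<^sup>+ z. emeasure PH (Pair z -` D) \<partial>PZ)"
    by (rule PH.emeasure_pair_measure_alt[OF DP])
  also have "\<dots> = (\<integral>\<^sup>+ z. ennreal (g z) \<partial>PZ)"
  proof (rule nn_integral_cong)
    fix z :: "real \<times> real"
    show "emeasure PH (Pair z -` D) = ennreal (g z)"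
    proof (cases "fst z \<in> S")
      case True
      have "emeasure PH (Pair z -` D) = emeasure M {w \<in> space M. H w < Yf z}"
        unfolding PH_def using True
        by (subst emeasure_distr) (auto intro!: arg_cong2[where f=emeasure] simp: D_def)
      also have "\<dots> = ennreal (fading_cdf m1 m2 (Yf z))"
        by (simp add: emeasure_eq_measure H_less)
      finally show ?thesis using True by (simp add: g_def)
    next
      case False
      then have "Pair z -` D = {}" unfolding D_def by auto
      then show ?thesis using False by (simp add: g_def)
    qed
  qed
  also have "\<dots> = (\<integral>\<^sup>+ w. ennreal (g (X w, I w)) \<partial>M)"
    unfolding PZ_def by (subst nn_integral_distr) auto
  also have "\<dots> = ennreal (\<integral>w. g (X w, I w) \<partial>M)"
    using gb by (intro nn_integral_eq_integral integrable_const_bound[where B=1]) auto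
  finally have "ennreal (measure M {w \<in> space M. X w \<in> S \<and> H w < Yf (X w, I w)})
      = ennreal (\<integral>w. g (X w, I w) \<partial>M)"
    by (simp add: emeasure_eq_measure)
  moreover have "0 \<le> (\<integral>w. g (X w, I w) \<partial>M)" using gb by (intro integral_nonneg_AE) auto
  ultimately show ?thesis by (simp add: g_def)
qed

end


lemma disc_point:
  fixes f :: "int \<Rightarrow> real"
  assumes r: "r > 0"
  shows "indicator {0<..<tm} x * f \<lfloor>r * x\<rfloor>
    = (\<Sum>z\<in>{0..\<lfloor>r * tm\<rfloor>}. indicator ({0<..<tm} \<inter> {x. \<lfloor>r * x\<rfloor> = z}) x * f z)"
proof (cases "x \<in> {0<..<tm}")
  case True
  have mem: "\<lfloor>r * x\<rfloor> \<in> {0..\<lfloor>r * tm\<rfloor>}"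
    using True r by (auto intro!: floor_mono)
  have "(\<Sum>z\<in>{0..\<lfloor>r * tm\<rfloor>}. indicator ({0<..<tm} \<inter> {x. \<lfloor>r * x\<rfloor> = z}) x * f z)
      = (\<Sum>z\<in>{0..\<lfloor>r * tm\<rfloor>}. if \<lfloor>r * x\<rfloor> = z then f z else 0)"
    using True by (intro sum.cong) (auto simp: indicator_def)
  also have "\<dots> = f \<lfloor>r * x\<rfloor>" using mem by (simp add: sum.delta)
  finally show ?thesis using True by simp
next
  case False
  have "(\<Sum>z\<in>{0..\<lfloor>r * tm\<rfloor>}. indicator ({0<..<tm} \<inter> {x. \<lfloor>r * x\<rfloor> = z}) x * f z) = 0"
    using False by (intro sum.neutral) (auto simp: indicator_def)
  then show ?thesis using False by simp
qed

context setting begin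

lemma disc_sum:
  fixes c :: "real \<Rightarrow> 'w \<Rightarrow> real" and phi :: "real \<Rightarrow> real"
  assumes r: "r > 0" and c[measurable]: "\<And>t. c t \<in> borel_measurable M"
    and cb: "\<And>t w. w \<in> space M \<Longrightarrow> \<bar>c t w\<bar> \<le> B"
  shows "(\<integral>w. indicator {0<..<tm} (X w) * c (phi (of_int \<lfloor>r * X w\<rfloor> / r)) w \<partial>M)
    = (\<Sum>z\<in>{0..\<lfloor>r * tm\<rfloor>}. \<integral>w. indicator ({0<..<tm} \<inter> {x. \<lfloor>r * x\<rfloor> = z}) (X w) * c (phi (of_int z / r)) w \<partial>M)"
proof -
  have "(\<integral>w. indicator {0<..<tm} (X w) * c (phi (of_int \<lfloor>r * X w\<rfloor> / r)) w \<partial>M)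
    = (\<integral>w. (\<Sum>z\<in>{0..\<lfloor>r * tm\<rfloor>}. indicator ({0<..<tm} \<inter> {x. \<lfloor>r * x\<rfloor> = z}) (X w) * c (phi (of_int z / r)) w) \<partial>M)"
    using disc_point[OF r, of tm "X _" "\<lambda>z. c (phi (of_int z / r)) _"]
    by (intro Bochner_Integration.integral_cong) auto
  also have "\<dots> = (\<Sum>z\<in>{0..\<lfloor>r * tm\<rfloor>}. \<integral>w. indicator ({0<..<tm} \<inter> {x. \<lfloor>r * x\<rfloor> = z}) (X w) * c (phi (of_int z / r)) w \<partial>M)"
  proof (rule Bochner_Integration.integral_sum)
    fix z :: int
    have A[measurable]: "{0<..<tm} \<inter> {x. \<lfloor>r * x\<rfloor> = z} \<in> sets (borel :: real measure)"
      by measurable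
    show "integrable M (\<lambda>w. indicator ({0<..<tm} \<inter> {x. \<lfloor>r * x\<rfloor> = z}) (X w) * c (phi (of_int z / r)) w)"
      using cb by (intro integrable_const_bound[where B=B] AE_I2) (auto simp: indicator_def intro: order_trans[OF abs_ge_zero cb])
  qed
  finally show ?thesis .
qed

end


lemma floor_approx: "(\<lambda>n. of_int \<lfloor>real (Suc n) * x\<rfloor> / real (Suc n)) \<longlonglongrightarrow> (x::real)"
proof (rule tendsto_sandwich[where f="\<lambda>n. x - inverse (real (Suc n))" and h="\<lambda>n. x"])
  show "\<forall>\<^sub>F n in sequentially. x - inverse (real (Suc n)) \<le> of_int \<lfloor>real (Suc n) * x\<rfloor> / real (Suc n)"
  proof (intro always_eventually allI)
    fix n
    have r: "real (Suc n) > 0" by simp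
    have "real (Suc n) * x < of_int \<lfloor>real (Suc n) * x\<rfloor> + 1" by linarith
    then have "x < (of_int \<lfloor>real (Suc n) * x\<rfloor> + 1) / real (Suc n)"
      using r by (simp add: field_simps)
    then show "x - inverse (real (Suc n)) \<le> of_int \<lfloor>real (Suc n) * x\<rfloor> / real (Suc n)"
      by (simp add: add_divide_distrib inverse_eq_divide)
  qed
  show "\<forall>\<^sub>F n in sequentially. of_int \<lfloor>real (Suc n) * x\<rfloor> / real (Suc n) \<le> x"
  proof (intro always_eventually allI)
    fix n
    have r: "real (Suc n) > 0" by simp
    have "of_int \<lfloor>real (Suc n) * x\<rfloor> \<le> real (Suc n) * x" by linarith
    then show "of_int \<lfloor>real (Suc n) * x\<rfloor> / real (Suc n) \<le> x"
      using r by (simp add: divide_le_eq mult.commute)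
  qed
  show "(\<lambda>n. x - inverse (real (Suc n))) \<longlonglongrightarrow> x"
    using tendsto_diff[OF tendsto_const LIMSEQ_inverse_real_of_nat, of x] by simp
qed simp

lemma cont_abs_UNIV: "continuous_on UNIV (\<lambda>t::real. \<bar>t\<bar>)"
  by (intro continuous_intros)

context setting begin

lemma Lc_cont: "continuous_on UNIV (\<lambda>t. L' \<bar>t\<bar>)"
  by (rule continuous_on_compose2[OF L'_cont cont_abs_UNIV]) auto

lemma Lc_meas[measurable]: "(\<lambda>t. L' \<bar>t\<bar>) \<in> borel_measurable borel"
  by (rule borel_measurable_continuous_onI[OF Lc_cont])

lemma cond_laplace:
  fixes phi :: "real \<Rightarrow> real"
  assumes phic: "continuous_on UNIV phi" and phin: "\<And>x. phi x \<ge> 0"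
  shows "(\<integral>w. indicator {0<..<tm} (X w) * exp (- phi (X w) * (I w + sig2)) \<partial>M)
       = (\<integral>w. indicator {0<..<tm} (X w) * (exp (- phi (X w) * sig2) * L' (phi (X w))) \<partial>M)"
proof -
  have phim[measurable]: "phi \<in> borel_measurable borel"
    by (rule borel_measurable_continuous_onI[OF phic])
  have Lphi[measurable]: "(\<lambda>x. L' (phi x)) \<in> borel_measurable borel"
    by (rule borel_measurable_continuous_onI, rule continuous_on_compose2[OF L'_cont phic])
       (use phin in auto)
  define r where "r n = real (Suc n)" for n
  define c1 where "c1 t w = exp (- \<bar>t\<bar> * (I w + sig2))" for t w
  define c2 where "c2 t (w::'w) = exp (- \<bar>t\<bar> * sig2) * L' \<bar>t\<bar>" for t w
  have c1m[measurable]: "c1 t \<in> borel_measurable M" for t unfolding c1_def by measurable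
  have c2m[measurable]: "c2 t \<in> borel_measurable M" for t unfolding c2_def by measurable
  have c1b: "\<bar>c1 t w\<bar> \<le> 1" if "w \<in> space M" for t w
    using Inn[OF that] sig2 unfolding c1_def by (simp add: mult_nonneg_nonneg)
  have c2b: "\<bar>c2 t w\<bar> \<le> 1" for t w
  proof -
    have "exp (- \<bar>t\<bar> * sig2) \<le> 1" using sig2 by (simp add: mult_nonneg_nonneg)
    moreover have "0 \<le> L' \<bar>t\<bar> \<and> L' \<bar>t\<bar> \<le> 1" using L'_bounds by simp
    ultimately show ?thesis unfolding c2_def by (simp add: abs_mult mult_le_one)
  qed
  define LHS where "LHS n = (\<integral>w. indicator {0<..<tm} (X w) * c1 (phi (of_int \<lfloor>r n * X w\<rfloor> / r n)) w \<partial>M)" for n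
  define RHS where "RHS n = (\<integral>w. indicator {0<..<tm} (X w) * c2 (phi (of_int \<lfloor>r n * X w\<rfloor> / r n)) w \<partial>M)" for n
  have eqn: "LHS n = RHS n" for n
  proof -
    have rp: "r n > 0" unfolding r_def by simp
    have "LHS n = (\<Sum>z\<in>{0..\<lfloor>r n * tm\<rfloor>}. \<integral>w. indicator ({0<..<tm} \<inter> {x. \<lfloor>r n * x\<rfloor> = z}) (X w) * c1 (phi (of_int z / r n)) w \<partial>M)"
      unfolding LHS_def by (rule disc_sum[OF rp c1m c1b])
    also have "\<dots> = (\<Sum>z\<in>{0..\<lfloor>r n * tm\<rfloor>}. \<integral>w. indicator ({0<..<tm} \<inter> {x. \<lfloor>r n * x\<rfloor> = z}) (X w) * c2 (phi (of_int z / r n)) w \<partial>M)"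
    proof (rule sum.cong[OF refl])
      fix z
      define A where "A = {0<..<tm} \<inter> {x. \<lfloor>r n * x\<rfloor> = z}"
      have A[measurable]: "A \<in> sets (borel :: real measure)" unfolding A_def by measurable
      define t where "t = \<bar>phi (of_int z / r n)\<bar>"
      have t: "t \<ge> 0" unfolding t_def by simp
      have "(\<integral>w. indicator A (X w) * c1 (phi (of_int z / r n)) w \<partial>M)
          = (\<integral>w. exp (- t * sig2) * (exp (- t * I w) * indicator A (X w)) \<partial>M)"
        unfolding c1_def t_def[symmetric]
        by (intro Bochner_Integration.integral_cong) (auto simp: algebra_simps exp_add[symmetric])
      also have "\<dots> = exp (- t * sig2) * (\<integral>w. exp (- t * I w) * indicator A (X w) \<partial>M)"
        by (rule integral_mult_right_zero)
      also have "\<dots> = exp (- t * sig2) * (L' t * measure M {w \<in> space M. X w \<in> A})"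
        using Ilap[OF t A] Lap_eq[OF t] by simp
      also have "measure M {w \<in> space M. X w \<in> A} = (\<integral>w. indicator A (X w) \<partial>M)"
      proof -
        have "(\<integral>w. indicator A (X w) \<partial>M) = (\<integral>w. indicator {w \<in> space M. X w \<in> A} w \<partial>M)"
          by (rule Bochner_Integration.integral_cong) (auto simp: indicator_def)
        also have "\<dots> = measure M {w \<in> space M. X w \<in> A}"
          using Bochner_Integration.integral_indicator[of M "{w \<in> space M. X w \<in> A}"]
          by (simp add: Int_absorb2 subset_iff)
        finally show ?thesis by simp
      qed
      also have "exp (- t * sig2) * (L' t * (\<integral>w. indicator A (X w) \<partial>M))
          = (\<integral>w. indicator A (X w) * c2 (phi (of_int z / r n)) w \<partial>M)"
        unfolding c2_def t_def[symmetric] by (simp add: mult.commute mult.left_commute)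
      finally show "(\<integral>w. indicator A (X w) * c1 (phi (of_int z / r n)) w \<partial>M)
          = (\<integral>w. indicator A (X w) * c2 (phi (of_int z / r n)) w \<partial>M)" .
    qed
    also have "\<dots> = RHS n"
      unfolding RHS_def by (rule disc_sum[OF rp c2m c2b, symmetric])
    finally show ?thesis .
  qed
  have ptw: "(\<lambda>n. phi (of_int \<lfloor>r n * x\<rfloor> / r n)) \<longlonglongrightarrow> phi x" for x
    unfolding r_def
    by (rule isCont_tendsto_compose[OF _ floor_approx])
       (use phic in \<open>simp add: continuous_on_eq_continuous_at\<close>)
  have lim1: "LHS \<longlonglongrightarrow> (\<integral>w. indicator {0<..<tm} (X w) * exp (- phi (X w) * (I w + sig2)) \<partial>M)"
    unfolding LHS_def
  proof (rule integral_dominated_convergence[where w="\<lambda>_. 1"])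
    show "AE x in M. (\<lambda>n. indicator {0<..<tm} (X x) * c1 (phi (of_int \<lfloor>r n * X x\<rfloor> / r n)) x)
        \<longlonglongrightarrow> indicator {0<..<tm} (X x) * exp (- phi (X x) * (I x + sig2))"
    proof (intro AE_I2)
      fix x
      have "(\<lambda>n. indicator {0<..<tm} (X x) * exp (- \<bar>phi (of_int \<lfloor>r n * X x\<rfloor> / r n)\<bar> * (I x + sig2)))
        \<longlonglongrightarrow> indicator {0<..<tm} (X x) * exp (- \<bar>phi (X x)\<bar> * (I x + sig2))"
        by (intro tendsto_intros ptw)
      then show "(\<lambda>n. indicator {0<..<tm} (X x) * c1 (phi (of_int \<lfloor>r n * X x\<rfloor> / r n)) x)
        \<longlonglongrightarrow> indicator {0<..<tm} (X x) * exp (- phi (X x) * (I x + sig2))"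
        unfolding c1_def using phin[of "X x"] by simp
    qed
    show "\<And>n. AE x in M. norm (indicator {0<..<tm} (X x) * c1 (phi (of_int \<lfloor>r n * X x\<rfloor> / r n)) x) \<le> 1"
      using c1b by (intro AE_I2) (auto simp: indicator_def)
  qed (auto simp: c1_def r_def)
  have lim2: "RHS \<longlonglongrightarrow> (\<integral>w. indicator {0<..<tm} (X w) * (exp (- phi (X w) * sig2) * L' (phi (X w))) \<partial>M)"
    unfolding RHS_def
  proof (rule integral_dominated_convergence[where w="\<lambda>_. 1"])
    show "AE x in M. (\<lambda>n. indicator {0<..<tm} (X x) * c2 (phi (of_int \<lfloor>r n * X x\<rfloor> / r n)) x)
        \<longlonglongrightarrow> indicator {0<..<tm} (X x) * (exp (- phi (X x) * sig2) * L' (phi (X x)))"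
    proof (intro AE_I2)
      fix x
      have cL: "isCont (\<lambda>t. L' \<bar>t\<bar>) (phi (X x))"
        using Lc_cont by (simp add: continuous_on_eq_continuous_at)
      have "(\<lambda>n. indicator {0<..<tm} (X x) * (exp (- \<bar>phi (of_int \<lfloor>r n * X x\<rfloor> / r n)\<bar> * sig2)
            * L' \<bar>phi (of_int \<lfloor>r n * X x\<rfloor> / r n)\<bar>))
        \<longlonglongrightarrow> indicator {0<..<tm} (X x) * (exp (- \<bar>phi (X x)\<bar> * sig2) * L' \<bar>phi (X x)\<bar>)"
        by (intro tendsto_intros ptw isCont_tendsto_compose[OF cL])
      then show "(\<lambda>n. indicator {0<..<tm} (X x) * c2 (phi (of_int \<lfloor>r n * X x\<rfloor> / r n)) x)
        \<longlonglongrightarrow> indicator {0<..<tm} (X x) * (exp (- phi (X x) * sig2) * L' (phi (X x)))"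
        unfolding c2_def using phin[of "X x"] by simp
    qed
    show "\<And>n. AE x in M. norm (indicator {0<..<tm} (X x) * c2 (phi (of_int \<lfloor>r n * X x\<rfloor> / r n)) x) \<le> 1"
      using c2b by (intro AE_I2) (auto simp: indicator_def)
  qed (auto simp: c2_def r_def)
  have "RHS \<longlonglongrightarrow> (\<integral>w. indicator {0<..<tm} (X w) * exp (- phi (X w) * (I w + sig2)) \<partial>M)"
  proof -
    have "LHS = RHS" using eqn by (rule ext)
    then show ?thesis using lim1 by simp
  qed
  then show ?thesis using lim2 LIMSEQ_unique by blast
qed

end


lemma LBINT_eq:
  fixes f :: "real \<Rightarrow> real" and tm :: real
  assumes "0 \<le> tm"
  shows "(LBINT t=0..tm. f t) = (\<integral>t. indicator {0<..<tm} t * f t \<partial>lborel)"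
proof -
  have e0: "einterval (ereal 0) (ereal tm) = {0<..<tm}" by (rule einterval_eq_Icc)
  have e: "einterval 0 (ereal tm) = {0<..<tm}" using e0 by (metis zero_ereal_def)
  show ?thesis using assms unfolding interval_lebesgue_integral_def set_lebesgue_integral_def
    by (simp add: e e0)
qed

lemma binom_exp:
  fixes e :: real
  shows "(1 - e) ^ m = (\<Sum>q = 0..m. real (m choose q) * (-1) ^ q * e ^ q)"
proof -
  have "(1 - e) ^ m = (- e + 1) ^ m" by simp
  also have "\<dots> = (\<Sum>q\<le>m. real (m choose q) * (- e) ^ q * 1 ^ (m - q))"
    by (rule binomial_ring)
  also have "\<dots> = (\<Sum>q = 0..m. real (m choose q) * (-1) ^ q * e ^ q)"
  proof (rule sum.cong)
    show "{..m} = {0..m}" by auto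
  next
    fix q assume "q \<in> {0..m}"
    have "(- e) ^ q = (-1) ^ q * e ^ q"
      by (metis mult_minus1 power_mult_distrib)
    then show "real (m choose q) * (- e) ^ q * 1 ^ (m - q) = real (m choose q) * (-1) ^ q * e ^ q"
      by simp
  qed
  finally show ?thesis .
qed


context setting begin

lemma pair_main:
  fixes tm :: real and phi0 :: "real \<Rightarrow> real" and E :: "'w set"
  assumes tm: "0 \<le> tm" "tm \<le> pi"
    and phic: "continuous_on UNIV phi0" and phin: "\<And>x. phi0 x \<ge> 0"
    and E: "E \<in> sets M"
    and Eiff: "\<And>w. w \<in> space M \<Longrightarrow> H w > 0 \<Longrightarrow> X w > 0 \<Longrightarrow>
        (w \<in> E \<longleftrightarrow> (X w < tm \<longrightarrow> alph m1 m2 * H w < phi0 (X w) * (I w + sig2)))"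
  shows "measure M E = (\<Sum>q = 0..m1. real (m1 choose q) * (-1) ^ q *
            (LBINT t=0..tm. exp (- real q * phi0 t * sig2) * Lap (real q * phi0 t) * sin t / 2))
          + (1 + cos tm) / 2"
proof -
  define al where "al = alph m1 m2"
  have al: "al > 0" unfolding al_def using alph_pos[OF m2] .
  have phim[measurable]: "phi0 \<in> borel_measurable borel"
    by (rule borel_measurable_continuous_onI[OF phic])
  define S where "S = {0<..<tm}"
  define Yf where "Yf p = phi0 (fst p) * (snd p + sig2) / al" for p :: "real \<times> real"
  have Yf0: "Yf \<in> borel_measurable ((borel :: real measure) \<Otimes>\<^sub>M (borel :: real measure))"
    unfolding Yf_def by measurable
  have Yfm[measurable]: "Yf \<in> borel_measurable (borel :: (real \<times> real) measure)"
    using Yf0 unfolding borel_prod .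
  define E1 where "E1 = {w \<in> space M. tm \<le> X w}"
  define E2 where "E2 = {w \<in> space M. X w \<in> S \<and> H w < Yf (X w, I w)}"
  have E1m: "E1 \<in> sets M" unfolding E1_def by measurable
  have E2m: "E2 \<in> sets M" unfolding E2_def S_def by measurable
  have AEH: "AE w in M. H w > 0"
  proof -
    have "{w \<in> space M. \<not> H w > 0} = {w \<in> space M. H w \<le> 0}" by auto
    moreover have "emeasure M {w \<in> space M. H w \<le> 0} = 0"
      using H_le0 by (simp add: emeasure_eq_measure)
    ultimately show ?thesis by (subst AE_iff_measurable) auto
  qed
  have AEX: "AE w in M. X w > 0"
  proof -
    have "{w \<in> space M. \<not> X w > 0} = {w \<in> space M. X w \<le> 0}" by auto
    moreover have "emeasure M {w \<in> space M. X w \<le> 0} = 0"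
      using prob_X_le0 by (simp add: emeasure_eq_measure)
    ultimately show ?thesis by (subst AE_iff_measurable) auto
  qed
  have "measure M E = measure M (E1 \<union> E2)"
  proof (rule measure_eq_AE)
    show "AE w in M. (w \<in> E) = (w \<in> E1 \<union> E2)"
      using AEH AEX
    proof (eventually_elim)
      case (elim w)
      show ?case
      proof (cases "w \<in> space M")
        case True
        have "H w < Yf (X w, I w) \<longleftrightarrow> al * H w < phi0 (X w) * (I w + sig2)"
          unfolding Yf_def using al by (simp add: less_divide_eq mult.commute)
        then show ?thesis using Eiff[OF True elim] True elim unfolding E1_def E2_def S_def al_def
          by auto
      next
        case False
        then show ?thesis using E sets.sets_into_space[OF E] unfolding E1_def E2_def by auto
      qed
    qed
  qed (use E E1m E2m in auto)
  also have "\<dots> = measure M E1 + measure M E2"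
    using E1m E2m by (intro measure_Union) (auto simp: E1_def E2_def S_def)
  also have "measure M E1 = (1 + cos tm) / 2"
    unfolding E1_def by (rule prob_X_ge[OF tm])
  also have "measure M E2 = (\<integral>w. indicator S (X w) * fading_cdf m1 m2 (Yf (X w, I w)) \<partial>M)"
    unfolding E2_def by (rule prob_pair) (auto simp: S_def)
  also have "\<dots> = (\<integral>w. (\<Sum>q = 0..m1. real (m1 choose q) * (-1) ^ q *
        (indicator S (X w) * exp (- (real q * phi0 (X w)) * (I w + sig2)))) \<partial>M)"
  proof (rule Bochner_Integration.integral_cong[OF refl])
    fix w assume w: "w \<in> space M"
    show "indicator S (X w) * fading_cdf m1 m2 (Yf (X w, I w)) = (\<Sum>q = 0..m1. real (m1 choose q) * (-1) ^ q *
        (indicator S (X w) * exp (- (real q * phi0 (X w)) * (I w + sig2))))"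
    proof (cases "X w \<in> S")
      case True
      have Y0: "Yf (X w, I w) \<ge> 0"
        unfolding Yf_def using phin[of "X w"] Inn[OF w] sig2 al by simp
      have "fading_cdf m1 m2 (Yf (X w, I w)) = (1 - exp (- (phi0 (X w) * (I w + sig2)))) ^ m1"
        using Y0 al m2 unfolding fading_cdf_def Yf_def by (simp add: al_def alph_def)
      also have "\<dots> = (\<Sum>q = 0..m1. real (m1 choose q) * (-1) ^ q * exp (- (phi0 (X w) * (I w + sig2))) ^ q)"
        by (rule binom_exp)
      also have "\<dots> = (\<Sum>q = 0..m1. real (m1 choose q) * (-1) ^ q * exp (- (real q * phi0 (X w)) * (I w + sig2)))"
        by (intro sum.cong refl) (simp add: exp_of_nat_mult[symmetric] algebra_simps)
      finally show ?thesis using True by simp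
    qed simp
  qed
  also have "\<dots> = (\<Sum>q = 0..m1. real (m1 choose q) * (-1) ^ q *
        (\<integral>w. indicator S (X w) * exp (- (real q * phi0 (X w)) * (I w + sig2)) \<partial>M))"
  proof (subst Bochner_Integration.integral_sum)
    fix q assume "q \<in> {0..m1}"
    show "integrable M (\<lambda>w. real (m1 choose q) * (-1) ^ q *
        (indicator S (X w) * exp (- (real q * phi0 (X w)) * (I w + sig2))))"
      unfolding S_def
      by (intro integrable_mult_right integrable_const_bound[where B=1] AE_I2)
         (auto simp: indicator_def intro!: mult_nonneg_nonneg add_nonneg_nonneg Inn phin less_imp_le[OF sig2])
  qed simp
  also have "\<dots> = (\<Sum>q = 0..m1. real (m1 choose q) * (-1) ^ q *
            (LBINT t=0..tm. exp (- real q * phi0 t * sig2) * Lap (real q * phi0 t) * sin t / 2))"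
  proof (intro sum.cong refl arg_cong2[where f="(*)"])
    fix q assume "q \<in> {0..m1}"
    define phi where "phi x = real q * phi0 x" for x
    have phic': "continuous_on UNIV phi" unfolding phi_def by (intro continuous_intros phic)
    have phin': "phi x \<ge> 0" for x unfolding phi_def using phin by simp
    have Lphi[measurable]: "(\<lambda>x. L' (phi x)) \<in> borel_measurable borel"
      by (rule borel_measurable_continuous_onI, rule continuous_on_compose2[OF L'_cont phic'])
         (use phin' in auto)
    have phim'[measurable]: "phi \<in> borel_measurable borel" unfolding phi_def by measurable
    have "(\<integral>w. indicator S (X w) * exp (- (real q * phi0 (X w)) * (I w + sig2)) \<partial>M)
        = (\<integral>w. indicator {0<..<tm} (X w) * exp (- phi (X w) * (I w + sig2)) \<partial>M)"
      unfolding S_def phi_def ..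
    also have "\<dots> = (\<integral>w. indicator {0<..<tm} (X w) * (exp (- phi (X w) * sig2) * L' (phi (X w))) \<partial>M)"
      by (rule cond_laplace[OF phic' phin'])
    also have "\<dots> = (\<integral>x. rho x * (indicator {0<..<tm} x * (exp (- phi x * sig2) * L' (phi x))) \<partial>lborel)"
      by (rule X_integral) measurable
    also have "\<dots> = (\<integral>x. indicator {0<..<tm} x * (exp (- real q * phi0 x * sig2) * Lap (real q * phi0 x) * sin x / 2) \<partial>lborel)"
    proof (rule Bochner_Integration.integral_cong[OF refl])
      fix x :: real
      show "rho x * (indicator {0<..<tm} x * (exp (- phi x * sig2) * L' (phi x))) =
          indicator {0<..<tm} x * (exp (- real q * phi0 x * sig2) * Lap (real q * phi0 x) * sin x / 2)"
      proof (cases "x \<in> {0<..<tm}")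
        case True
        then have "rho x = sin x / 2" using tm unfolding rho_def by auto
        moreover have "Lap (real q * phi0 x) = L' (phi x)" unfolding phi_def
          using phin[of x] by (intro Lap_eq) simp
        ultimately show ?thesis using True unfolding phi_def by simp
      qed simp
    qed
    also have "\<dots> = (LBINT t=0..tm. exp (- real q * phi0 t * sig2) * Lap (real q * phi0 t) * sin t / 2)"
      by (rule LBINT_eq[OF tm(1), symmetric])
    finally show "(\<integral>w. indicator S (X w) * exp (- (real q * phi0 (X w)) * (I w + sig2)) \<partial>M)
        = (LBINT t=0..tm. exp (- real q * phi0 t * sig2) * Lap (real q * phi0 t) * sin t / 2)" .
  qed
  finally show ?thesis by simp
qed

end


theorem theorem1:
  fixes M :: "'w measure"
    and K m :: nat and N :: "nat \<Rightarrow> nat"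
    and Rearth :: real and a :: "nat \<Rightarrow> real" and thb gam Pt G c f sig2 lam m2 bet :: real
    and m1 :: nat
    and theta H I :: "nat \<Rightarrow> nat \<Rightarrow> 'w \<Rightarrow> real"
  assumes P: "prob_space M"
    and Re_pos: "Rearth > 0" and alt_pos: "\<And>k. a k > 0"
    and thb: "0 < thb" "thb < pi / 2"
    and gam: "0 < gam" "gam \<le> 1"
    and pos: "Pt > 0" "G > 0" "c > 0" "f > 0" "sig2 > 0" "lam > 0" "m2 > 0"
    and m1_pos: "m1 \<ge> 1"
    and m_tier: "m \<in> {1..K}"
    and bet: "0 < bet" "gam < 1 \<Longrightarrow> bet < gam / (1 - gam)"
    and meas: "\<And>k j. k \<in> {1..K} - {m} \<Longrightarrow> j \<in> {1..N k} \<Longrightarrow>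
        theta k j \<in> borel_measurable M \<and> H k j \<in> borel_measurable M \<and> I k j \<in> borel_measurable M"
    and theta_distr: "\<And>k j. k \<in> {1..K} - {m} \<Longrightarrow> j \<in> {1..N k} \<Longrightarrow>
        distributed M lborel (theta k j) (\<lambda>x. ennreal (indicator {0..pi} x * sin x / 2))"
    and I_nonneg: "\<And>k j w. k \<in> {1..K} - {m} \<Longrightarrow> j \<in> {1..N k} \<Longrightarrow> w \<in> space M \<Longrightarrow>
        I k j w \<ge> 0"
    and H_cdf: "\<And>k j x. k \<in> {1..K} - {m} \<Longrightarrow> j \<in> {1..N k} \<Longrightarrow>
        measure M {w \<in> space M. H k j w \<le> x} = fading_cdf m1 m2 x"
    and H_indep: "\<And>k j B C. k \<in> {1..K} - {m} \<Longrightarrow> j \<in> {1..N k} \<Longrightarrow>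
        B \<in> sets (borel :: real measure) \<Longrightarrow> C \<in> sets (borel :: (real \<times> real) measure) \<Longrightarrow>
        measure M {w \<in> space M. H k j w \<in> B \<and> (theta k j w, I k j w) \<in> C}
          = measure M {w \<in> space M. H k j w \<in> B} * measure M {w \<in> space M. (theta k j w, I k j w) \<in> C}"
    and I_cond_laplace: "\<And>k j s A. k \<in> {1..K} - {m} \<Longrightarrow> j \<in> {1..N k} \<Longrightarrow> s \<ge> 0 \<Longrightarrow>
        A \<in> sets borel \<Longrightarrow>
        (\<integral>w. exp (- s * I k j w) * indicator A (theta k j w) \<partial>M)
          = laplace_I Rearth a thb lam Pt G c f m1 m2 k s * measure M {w \<in> space M. theta k j w \<in> A}"
    and events_indep: "prob_space.indep_events M
        (\<lambda>(k, j). {w \<in> space M.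
           SINR_sat Rearth a thb gam Pt G c f sig2 k (theta k j w) (H k j w) (I k j w) < bet})
        {(k, j). k \<in> {1..K} - {m} \<and> j \<in> {1..N k}}"
  shows "measure M {w \<in> space M. \<forall>k \<in> {1..K} - {m}. \<forall>j \<in> {1..N k}.
            SINR_sat Rearth a thb gam Pt G c f sig2 k (theta k j w) (H k j w) (I k j w) < bet}
         = (\<Prod>k \<in> {1..K} - {m}.
             ((\<Sum>q = 0..m1. real (m1 choose q) * (-1) ^ q *
                 (LBINT th=0..(theta_max Rearth a thb k).
                    exp (- real q * s_ES Rearth a gam bet Pt G c f m1 m2 k th * sig2)
                    * laplace_I Rearth a thb lam Pt G c f m1 m2 k
                        (real q * s_ES Rearth a gam bet Pt G c f m1 m2 k th)
                    * sin th / 2))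
              + (1 + cos (theta_max Rearth a thb k)) / 2) ^ N k)"
proof -
  interpret P: prob_space M by (rule P)
  define K' where "K' = {1..K} - {m}"
  define Ix where "Ix = {(k, j). k \<in> {1..K} - {m} \<and> j \<in> {1..N k}}"
  define Ev where "Ev = (\<lambda>(k, j). {w \<in> space M.
           SINR_sat Rearth a thb gam Pt G c f sig2 k (theta k j w) (H k j w) (I k j w) < bet})"
  define br where "br k = (\<Sum>q = 0..m1. real (m1 choose q) * (-1) ^ q *
                 (LBINT th=0..(theta_max Rearth a thb k).
                    exp (- real q * s_ES Rearth a gam bet Pt G c f m1 m2 k th * sig2)
                    * laplace_I Rearth a thb lam Pt G c f m1 m2 k
                        (real q * s_ES Rearth a gam bet Pt G c f m1 m2 k th)
                    * sin th / 2))
              + (1 + cos (theta_max Rearth a thb k)) / 2" for k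
  have gd: "gam - bet * (1 - gam) > 0"
  proof (cases "gam < 1")
    case True
    then have "bet * (1 - gam) < gam / (1 - gam) * (1 - gam)"
      using bet by (intro mult_strict_right_mono) auto
    then show ?thesis using True by simp
  next
    case False
    then show ?thesis using gam by simp
  qed
  have indep: "Ev ` Ix \<subseteq> P.events"
    "\<And>J. J \<subseteq> Ix \<Longrightarrow> J \<noteq> {} \<Longrightarrow> finite J \<Longrightarrow> P.prob (\<Inter>j\<in>J. Ev j) = (\<Prod>j\<in>J. P.prob (Ev j))"
    using events_indep unfolding P.indep_events_def Ev_def Ix_def by auto
  have Evk: "P.prob (Ev (k, j)) = br k" if k: "k \<in> {1..K} - {m}" and j: "j \<in> {1..N k}" for k j
  proof -
    interpret S: setting M "theta k j" "H k j" "I k j" m1 m2 sig2 "laplace_I Rearth a thb lam Pt G c f m1 m2 k"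
    proof (unfold_locales)
      show "theta k j \<in> borel_measurable M" "H k j \<in> borel_measurable M" "I k j \<in> borel_measurable M"
        using meas[OF k j] by auto
      show "distributed M lborel (theta k j) (\<lambda>x. ennreal (indicator {0..pi} x * sin x / 2))"
        by (rule theta_distr[OF k j])
      show "\<And>w. w \<in> space M \<Longrightarrow> 0 \<le> I k j w" by (rule I_nonneg[OF k j])
      show "\<And>x. measure M {w \<in> space M. H k j w \<le> x} = fading_cdf m1 m2 x" by (rule H_cdf[OF k j])
      show "\<And>B C. B \<in> sets (borel :: real measure) \<Longrightarrow> C \<in> sets (borel :: (real \<times> real) measure) \<Longrightarrow>
        measure M {w \<in> space M. H k j w \<in> B \<and> (theta k j w, I k j w) \<in> C}
          = measure M {w \<in> space M. H k j w \<in> B} * measure M {w \<in> space M. (theta k j w, I k j w) \<in> C}"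
        by (rule H_indep[OF k j])
      show "\<And>s A. s \<ge> 0 \<Longrightarrow> A \<in> sets borel \<Longrightarrow>
        (\<integral>w. exp (- s * I k j w) * indicator A (theta k j w) \<partial>M)
          = laplace_I Rearth a thb lam Pt G c f m1 m2 k s * measure M {w \<in> space M. theta k j w \<in> A}"
        by (rule I_cond_laplace[OF k j])
    qed (use m1_pos pos in auto)
    have tmb: "0 \<le> theta_max Rearth a thb k \<and> theta_max Rearth a thb k \<le> pi"
      using theta_max_bounds[of Rearth a k thb] Re_pos alt_pos thb by auto
    have phic: "continuous_on UNIV (s_ES Rearth a gam bet Pt G c f m1 m2 k)"
      unfolding s_ES_def by (intro continuous_intros dist_cont) (use pos in auto)
    have phin: "s_ES Rearth a gam bet Pt G c f m1 m2 k x \<ge> 0" for x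
    proof -
      have "0 \<le> (fact m1) powr (- 1 / real m1) / m2 * bet / ((gam - bet * (1 - gam)) * Pt * G)"
        using gd pos bet by simp
      then show ?thesis unfolding s_ES_def by (rule mult_nonneg_nonneg[OF _ zero_le_power2])
    qed
    have Em: "Ev (k, j) \<in> sets M" using indep(1) k j unfolding Ix_def by auto
    show ?thesis unfolding br_def
    proof (rule S.pair_main[OF _ _ phic phin Em])
      fix w assume w: "w \<in> space M" and h: "H k j w > 0" and x: "theta k j w > 0"
      show "w \<in> Ev (k, j) \<longleftrightarrow> (theta k j w < theta_max Rearth a thb k \<longrightarrow>
          alph m1 m2 * H k j w < s_ES Rearth a gam bet Pt G c f m1 m2 k (theta k j w) * (I k j w + sig2))"
      proof (cases "theta k j w < theta_max Rearth a thb k")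
        case True
        show ?thesis using True w sinr_iff[of Rearth a k Pt G c f sig2 m2 gam bet "theta k j w" thb "H k j w" "I k j w" m1]
          Re_pos alt_pos pos gam gd bet h I_nonneg[OF k j w] unfolding Ev_def by auto
      next
        case False
        then show ?thesis using w bet unfolding Ev_def SINR_sat_def by auto
      qed
    qed (use tmb in auto)
  qed
  have finK: "finite K'" unfolding K'_def by simp
  have IxS: "Ix = Sigma K' (\<lambda>k. {1..N k})" unfolding Ix_def K'_def by auto
  have finIx: "finite Ix" unfolding IxS using finK by auto
  have rhs: "(\<Prod>k \<in> K'. br k ^ N k) = (\<Prod>p\<in>Ix. P.prob (Ev p))"
  proof -
    have "(\<Prod>k \<in> K'. br k ^ N k) = (\<Prod>k \<in> K'. \<Prod>j\<in>{1..N k}. P.prob (Ev (k, j)))"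
      by (intro prod.cong refl) (simp add: Evk K'_def)
    also have "\<dots> = (\<Prod>p\<in>Sigma K' (\<lambda>k. {1..N k}). P.prob (Ev p))"
      using finK by (subst prod.Sigma) auto
    finally show ?thesis unfolding IxS .
  qed
  have set_eq: "{w \<in> space M. \<forall>k \<in> {1..K} - {m}. \<forall>j \<in> {1..N k}.
            SINR_sat Rearth a thb gam Pt G c f sig2 k (theta k j w) (H k j w) (I k j w) < bet}
        = space M \<inter> (\<Inter>p\<in>Ix. Ev p)"
    unfolding Ix_def Ev_def by auto
  show ?thesis
  proof (cases "Ix = {}")
    case True
    have "N k = 0" if k: "k \<in> K'" for k
    proof (rule ccontr)
      assume "N k \<noteq> 0"
      then have "(k, 1) \<in> Ix" unfolding IxS using k by auto
      then show False using True by simp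
    qed
    then have "(\<Prod>k \<in> K'. br k ^ N k) = 1" by simp
    then show ?thesis unfolding set_eq using True P.prob_space by (simp add: br_def K'_def)
  next
    case False
    have "space M \<inter> (\<Inter>p\<in>Ix. Ev p) = (\<Inter>p\<in>Ix. Ev p)"
      using False unfolding Ev_def by auto
    then have "P.prob (space M \<inter> (\<Inter>p\<in>Ix. Ev p)) = (\<Prod>p\<in>Ix. P.prob (Ev p))"
      using indep(2)[OF subset_refl False finIx] by simp
    then show ?thesis unfolding set_eq rhs[symmetric] by (simp add: br_def K'_def)
  qed
qed


end
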